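(* Let $G$ be a tree with vertex set $V$. Then \[R(G)\geq 1+\sum_{v\in V}\left(\sqrt{d_v}-1\right),\] with equality if $G$ is a star.
   Context: $d_v$ is the degree of vertex $v$; the Randi\'c index is $R(G)=\sum_{uv\in E(G)}\frac{1}{\sqrt{d_ud_v}}$ (equal to $0$ for a single vertex). A star is a tree with one vertex adjacent to all others. *)

theory Defs
  imports Complex_Main
begin

definition simple_graph :: "'a set \<Rightarrow> 'a set set \<Rightarrow> bool" where
  "simple_graph V E \<longleftrightarrow> finite V \<and> (\<forall>e\<in>E. e \<subseteq> V \<and> card e = 2)"

definition adj :: "'a set set \<Rightarrow> 'a \<Rightarrow> 'a \<Rightarrow> bool" where
  "adj E u v \<longleftrightarrow> {u, v} \<in> E"

definition degree :: "'a set set \<Rightarrow> 'a \<Rightarrow> nat" where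
  "degree E v = card {e \<in> E. v \<in> e}"

definition connected_graph :: "'a set \<Rightarrow> 'a set set \<Rightarrow> bool" where
  "connected_graph V E \<longleftrightarrow> V \<noteq> {} \<and> (\<forall>u\<in>V. \<forall>v\<in>V. (adj E)\<^sup>*\<^sup>* u v)"

definition is_cycle :: "'a set set \<Rightarrow> 'a list \<Rightarrow> bool" where
  "is_cycle E vs \<longleftrightarrow> length vs \<ge> 3 \<and> distinct vs \<and>
     (\<forall>i. Suc i < length vs \<longrightarrow> adj E (vs ! i) (vs ! Suc i)) \<and>
     adj E (last vs) (hd vs)"

definition acyclic_graph :: "'a set \<Rightarrow> 'a set set \<Rightarrow> bool" where
  "acyclic_graph V E \<longleftrightarrow> \<not> (\<exists>vs. set vs \<subseteq> V \<and> is_cycle E vs)"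

definition is_tree :: "'a set \<Rightarrow> 'a set set \<Rightarrow> bool" where
  "is_tree V E \<longleftrightarrow> simple_graph V E \<and> connected_graph V E \<and> acyclic_graph V E"

definition is_star :: "'a set \<Rightarrow> 'a set set \<Rightarrow> bool" where
  "is_star V E \<longleftrightarrow> is_tree V E \<and> (\<exists>c\<in>V. \<forall>v\<in>V. v \<noteq> c \<longrightarrow> adj E c v)"

definition randic :: "'a set set \<Rightarrow> real" where
  "randic E = (\<Sum>e\<in>E. 1 / sqrt (\<Prod>v\<in>e. real (degree E v)))"

end

theory Submission
  imports Defs
begin

lemma card2E: assumes "card e = 2" obtains a b where "a \<noteq> b" "e = {a,b}"
  using assms by (auto simp: card_2_iff)

lemma edgeE:
  assumes "\<forall>e\<in>E. e \<subseteq> V \<and> card e = 2" "e \<in> E"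
  obtains a b where "a \<noteq> b" "e = {a,b}" "a \<in> V" "b \<in> V"
proof -
  have "card e = 2" "e \<subseteq> V" using assms by auto
  then show ?thesis using that by (auto simp: card_2_iff)
qed

lemma cycle_mono: "is_cycle E' vs \<Longrightarrow> E' \<subseteq> E \<Longrightarrow> is_cycle E vs"
  unfolding is_cycle_def adj_def by auto

lemma leaf_exists:
  assumes fin: "finite V" and ne: "V \<noteq> {}" and edges: "\<forall>e\<in>E. e \<subseteq> V \<and> card e = 2"
    and acyc: "\<not>(\<exists>vs. set vs \<subseteq> V \<and> is_cycle E vs)"
  shows "\<exists>x\<in>V. card {e\<in>E. x\<in>e} \<le> 1"
proof -
  define P where "P vs \<longleftrightarrow> vs \<noteq> [] \<and> distinct vs \<and> set vs \<subseteq> V \<and>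
     (\<forall>i. Suc i < length vs \<longrightarrow> adj E (vs!i) (vs!Suc i))" for vs
  obtain v0 where v0: "v0 \<in> V" using ne by blast
  have Pv0: "P [v0]" using v0 by (simp add: P_def)
  have fin_P: "finite {vs. P vs}"
  proof (rule finite_subset)
    show "{vs. P vs} \<subseteq> {xs. set xs \<subseteq> V \<and> length xs \<le> card V}"
    proof
      fix vs assume "vs \<in> {vs. P vs}"
      then have "distinct vs" "set vs \<subseteq> V" by (auto simp: P_def)
      then show "vs \<in> {xs. set xs \<subseteq> V \<and> length xs \<le> card V}"
        using distinct_card[of vs] card_mono[OF fin, of "set vs"] by auto
    qed
    show "finite {xs. set xs \<subseteq> V \<and> length xs \<le> card V}" by (rule finite_lists_length_le[OF fin])
  qed
  define L where "L = Max (length ` {vs. P vs})"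
  have "L \<in> length ` {vs. P vs}" unfolding L_def using fin_P Pv0 by (intro Max_in) auto
  then obtain vs where Pvs: "P vs" and Lvs: "length vs = L" by auto
  have maxL: "length ws \<le> L" if "P ws" for ws unfolding L_def using fin_P that by (intro Max_ge) auto
  define x where "x = vs ! 0"
  have xV: "x \<in> V" using Pvs by (auto simp: P_def x_def)
  have sub: "{e\<in>E. x\<in>e} \<subseteq> {{x, vs!1}}"
  proof
    fix e assume "e \<in> {e\<in>E. x\<in>e}"
    then have eE: "e \<in> E" and xe: "x \<in> e" by auto
    obtain a b where ab: "a \<noteq> b" "e = {a,b}" using edgeE[OF edges eE] by metis
    have "x = a \<or> x = b" using ab xe by auto
    then have "\<exists>z. z \<noteq> x \<and> e = {x,z}" using ab by (metis insert_commute)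
    then obtain z where z: "z \<noteq> x" "e = {x,z}" by blast
    have zV: "z \<in> V" using edges eE z by auto
    have adjxz: "adj E x z" "adj E z x" using eE z by (auto simp: adj_def insert_commute)
    show "e \<in> {{x, vs!1}}"
    proof (cases "z \<in> set vs")
      case False
      have "\<forall>i. Suc i < length (z#vs) \<longrightarrow> adj E ((z#vs)!i) ((z#vs)!Suc i)"
      proof (intro allI impI)
        fix i assume "Suc i < length (z#vs)"
        then show "adj E ((z#vs)!i) ((z#vs)!Suc i)"
          using Pvs adjxz(2) unfolding P_def x_def by (cases i) auto
      qed
      then have "P (z # vs)" using Pvs False zV unfolding P_def by auto
      then have "length (z#vs) \<le> L" by (rule maxL)
      then show ?thesis using Lvs by simp
    next
      case True
      then obtain i where i: "i < length vs" "vs ! i = z" by (auto simp: in_set_conv_nth)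
      have "i \<noteq> 0" using i z(1) x_def by (metis)
      show ?thesis
      proof (cases "i = 1")
        case True then show ?thesis using i z by simp
      next
        case False
        let ?c = "take (Suc i) vs"
        have c1: "3 \<le> length ?c" using i \<open>i\<noteq>0\<close> False by auto
        have c2: "distinct ?c" using Pvs by (simp add: P_def)
        have c3: "\<forall>j. Suc j < length ?c \<longrightarrow> adj E (?c ! j) (?c ! Suc j)"
          using Pvs by (auto simp: P_def)
        have "last ?c = z" using i by (simp add: take_Suc_conv_app_nth)
        moreover have "hd ?c = x" using i by (cases vs) (auto simp: x_def)
        ultimately have c4: "adj E (last ?c) (hd ?c)" using adjxz by simp
        have "is_cycle E ?c" unfolding is_cycle_def using c1 c2 c3 c4 by blast
        moreover have "set ?c \<subseteq> V" using Pvs set_take_subset[of "Suc i" vs] by (auto simp: P_def)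
        ultimately show ?thesis using acyc by blast
      qed
    qed
  qed
  have "card {e\<in>E. x\<in>e} \<le> card {{x, vs!1}}" by (rule card_mono) (use sub in auto)
  then show ?thesis using xV by auto
qed

lemma acyc_card:
  assumes "finite V" "V \<noteq> {}" "\<forall>e\<in>E. e \<subseteq> V \<and> card e = 2"
    "\<not>(\<exists>vs. set vs \<subseteq> V \<and> is_cycle E vs)"
  shows "card E < card V"
  using assms
proof (induction "card V" arbitrary: V E rule: less_induct)
  case less
  obtain x where xV: "x \<in> V" and dx: "card {e\<in>E. x\<in>e} \<le> 1"
    using leaf_exists[OF less.prems] by blast
  show ?case
  proof (cases "V = {x}")
    case True
    have "E = {}"
    proof -
      { fix e assume "e\<in>E"
        then have "e \<subseteq> {x}" "card e = 2" using less.prems True by auto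
        then have False using card_mono[of "{x}" e] by simp }
      thus ?thesis by blast
    qed
    then show ?thesis using True by simp
  next
    case False
    define V' where "V' = V - {x}"
    define E' where "E' = {e\<in>E. x \<notin> e}"
    have cV0: "card V > 0" using xV less.prems(1) card_gt_0_iff by blast
    have "card E' < card V'"
    proof (rule less.hyps)
      show "card V' < card V" using less.prems(1) xV cV0 by (simp add: V'_def)
      show "finite V'" using less.prems(1) by (simp add: V'_def)
      show "V' \<noteq> {}" using False xV by (auto simp: V'_def)
      show "\<forall>e\<in>E'. e \<subseteq> V' \<and> card e = 2" using less.prems(3) by (auto simp: E'_def V'_def)
      show "\<not>(\<exists>vs. set vs \<subseteq> V' \<and> is_cycle E' vs)"
        using less.prems(4) cycle_mono[of E' _ E] by (auto simp: V'_def E'_def)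
    qed
    moreover have "E = E' \<union> {e\<in>E. x\<in>e}" by (auto simp: E'_def)
    hence "card E \<le> card E' + card {e\<in>E. x\<in>e}" by (metis card_Un_le)
    moreover have "card V' = card V - 1" using xV less.prems(1) by (simp add: V'_def)
    ultimately show ?thesis using dx by linarith
  qed
qed

lemma conn_card:
  assumes fin: "finite V" and edges: "\<forall>e\<in>E. e \<subseteq> V \<and> card e = 2"
    and conn: "connected_graph V E"
  shows "card V \<le> card E + 1"
proof -
  have finE: "finite E"
    by (rule finite_subset[of E "Pow V"]) (use edges fin in auto)
  obtain r where r: "r \<in> V" using conn by (auto simp: connected_graph_def)
  have reach: "\<exists>n. (adj E ^^ n) r v" if "v \<in> V" for v
    using conn r that by (auto simp: connected_graph_def rtranclp_power)
  define dist where "dist v = (LEAST n. (adj E ^^ n) r v)" for v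
  have dist_ok: "(adj E ^^ dist v) r v" if "v\<in>V" for v
    using reach[OF that] unfolding dist_def by (rule LeastI_ex)
  have dist_le: "dist v \<le> n" if "(adj E ^^ n) r v" for v n
    unfolding dist_def using that by (rule Least_le)
  define par where "par v = (SOME u. (adj E ^^ (dist v - 1)) r u \<and> adj E u v)" for v
  have par: "(adj E ^^ (dist v - 1)) r (par v) \<and> adj E (par v) v \<and> dist v \<ge> 1"
    if v: "v \<in> V - {r}" for v
  proof -
    have "dist v \<noteq> 0"
    proof
      assume "dist v = 0"
      then have "r = v" using dist_ok[of v] v by auto
      then show False using v by auto
    qed
    then obtain m where m: "dist v = Suc m" by (cases "dist v") auto
    have "(adj E ^^ Suc m) r v" using dist_ok[of v] v m by auto
    then obtain u where "(adj E ^^ m) r u" "adj E u v" by (rule relpowp_Suc_E)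
    then have "\<exists>u. (adj E ^^ (dist v - 1)) r u \<and> adj E u v" using m by auto
    then have "(adj E ^^ (dist v - 1)) r (par v) \<and> adj E (par v) v"
      unfolding par_def by (rule someI_ex)
    then show ?thesis using m by simp
  qed
  define g where "g v = {par v, v}" for v
  have inj: "inj_on g (V - {r})"
  proof (rule inj_onI)
    fix v w assume v: "v \<in> V - {r}" and w: "w \<in> V - {r}" and gvw: "g v = g w"
    show "v = w"
    proof (rule ccontr)
      assume "v \<noteq> w"
      then have "par v = w" "par w = v" using gvw unfolding g_def by (auto simp: doubleton_eq_iff)
      then have "dist w \<le> dist v - 1" "dist v \<le> dist w - 1"
        using par[OF v] par[OF w] dist_le by metis+
      then show False using par[OF v] par[OF w] by linarith
    qed
  qed
  have "g ` (V - {r}) \<subseteq> E" using par by (auto simp: g_def adj_def)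
  then have "card (V - {r}) \<le> card E" using card_inj_on_le[OF inj] finE by blast
  then show ?thesis using r fin by simp
qed

lemma edge_f:
  fixes da db :: real
  assumes "da \<ge> 1" "db \<ge> 1"
  shows "1 / sqrt (da * db) - (1 / sqrt da + 1 / sqrt db) + 1 = (1 - 1/sqrt da) * (1 - 1/sqrt db)"
proof -
  have "sqrt da > 0" "sqrt db > 0" using assms by auto
  then show ?thesis by (simp add: real_sqrt_mult field_simps)
qed

theorem theorem4p1:
  fixes V :: "'a set" and E :: "'a set set"
  assumes "is_tree V E"
  shows "randic E \<ge> 1 + (\<Sum>v\<in>V. sqrt (real (degree E v)) - 1) \<and>
         (is_star V E \<longrightarrow> randic E = 1 + (\<Sum>v\<in>V. sqrt (real (degree E v)) - 1))"
proof -
  have fin: "finite V" and edges: "\<forall>e\<in>E. e \<subseteq> V \<and> card e = 2"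
    and conn: "connected_graph V E" and acyc: "\<not>(\<exists>vs. set vs \<subseteq> V \<and> is_cycle E vs)"
    using assms by (auto simp: is_tree_def simple_graph_def acyclic_graph_def)
  have ne: "V \<noteq> {}" using conn by (simp add: connected_graph_def)
  have finE: "finite E"
    by (rule finite_subset[of E "Pow V"]) (use edges fin in auto)
  have cardVE: "card V = card E + 1"
    using conn_card[OF fin edges conn] acyc_card[OF fin ne edges acyc] by linarith
  define d where "d v = real (degree E v)" for v
  have dge: "d v \<ge> 1" if "e \<in> E" "v \<in> e" for e v
  proof -
    have "{e\<in>E. v\<in>e} \<noteq> {}" using that by auto
    moreover have "finite {e\<in>E. v\<in>e}" using finE by auto
    ultimately have "card {e\<in>E. v\<in>e} \<ge> 1" by (simp add: Suc_le_eq card_gt_0_iff)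
    then show ?thesis by (simp add: d_def degree_def)
  qed
  define f where "f e = 1 / sqrt (\<Prod>v\<in>e. d v) - (\<Sum>v\<in>e. 1 / sqrt (d v)) + 1" for e
  have f_eq: "f e = (1 - 1/sqrt (d a)) * (1 - 1/sqrt (d b))"
    if "e \<in> E" "a \<noteq> b" "e = {a,b}" for e a b
    using that edge_f[of "d a" "d b"] dge[of e a] dge[of e b] by (simp add: f_def)
  have f_nn: "f e \<ge> 0" if eE: "e \<in> E" for e
  proof -
    obtain a b where ab: "a \<noteq> b" "e = {a,b}" using edgeE[OF edges eE] by metis
    have "1/sqrt (d a) \<le> 1" "1/sqrt (d b) \<le> 1" using dge[of e a] dge[of e b] eE ab by auto
    then show ?thesis using f_eq[OF eE ab] by simp
  qed
  have sqsum: "(\<Sum>v\<in>V. sqrt (d v)) = (\<Sum>e\<in>E. \<Sum>v\<in>e. 1 / sqrt (d v))"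
  proof -
    have "(\<Sum>v\<in>V. sqrt (d v)) = (\<Sum>v\<in>V. \<Sum>e\<in>{e\<in>E. v\<in>e}. 1 / sqrt (d v))"
    proof (rule sum.cong)
      fix v assume "v \<in> V"
      have "(\<Sum>e\<in>{e\<in>E. v\<in>e}. 1 / sqrt (d v)) = d v / sqrt (d v)"
        by (simp add: d_def degree_def)
      also have "\<dots> = sqrt (d v)" by (rule real_div_sqrt) (simp add: d_def)
      finally show "sqrt (d v) = (\<Sum>e\<in>{e\<in>E. v\<in>e}. 1 / sqrt (d v))" by simp
    qed simp
    also have "\<dots> = (\<Sum>e\<in>E. \<Sum>v\<in>{v\<in>V. v\<in>e}. 1 / sqrt (d v))"
      by (rule sum.swap_restrict[OF fin finE])
    also have "\<dots> = (\<Sum>e\<in>E. \<Sum>v\<in>e. 1 / sqrt (d v))"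
    proof (rule sum.cong)
      fix e assume "e \<in> E"
      then have "{v\<in>V. v\<in>e} = e" using edges by auto
      then show "(\<Sum>v\<in>{v\<in>V. v\<in>e}. 1 / sqrt (d v)) = (\<Sum>v\<in>e. 1 / sqrt (d v))" by simp
    qed simp
    finally show ?thesis .
  qed
  have key: "randic E - (1 + (\<Sum>v\<in>V. sqrt (real (degree E v)) - 1)) = (\<Sum>e\<in>E. f e)"
  proof -
    have "(\<Sum>v\<in>V. sqrt (real (degree E v)) - 1) = (\<Sum>v\<in>V. sqrt (d v)) - real (card V)"
      by (simp add: sum_subtractf d_def)
    moreover have "randic E = (\<Sum>e\<in>E. 1 / sqrt (\<Prod>v\<in>e. d v))"
      by (simp add: randic_def d_def)
    moreover have "(\<Sum>e\<in>E. f e) = (\<Sum>e\<in>E. 1 / sqrt (\<Prod>v\<in>e. d v))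
        - (\<Sum>e\<in>E. \<Sum>v\<in>e. 1 / sqrt (d v)) + real (card E)"
      by (simp add: f_def sum.distrib sum_subtractf)
    ultimately show ?thesis using sqsum cardVE by simp
  qed
  have part1: "randic E \<ge> 1 + (\<Sum>v\<in>V. sqrt (real (degree E v)) - 1)"
    using key sum_nonneg[of E f] f_nn by force
  have part2: "randic E = 1 + (\<Sum>v\<in>V. sqrt (real (degree E v)) - 1)" if star: "is_star V E"
  proof -
    obtain c where c: "c \<in> V" "\<forall>v\<in>V. v \<noteq> c \<longrightarrow> adj E c v"
      using star by (auto simp: is_star_def)
    have "f e = 0" if eE: "e \<in> E" for e
    proof -
      obtain a b where ab: "a \<noteq> b" "e = {a,b}" using edgeE[OF edges eE] by metis
      have "c \<in> e"
      proof (rule ccontr)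
        assume "c \<notin> e"
        then have ac: "a \<noteq> c" "b \<noteq> c" using ab by auto
        have aV: "a \<in> V" "b \<in> V" using edges eE ab by auto
        have "adj E c a" "adj E c b" using c ac aV by auto
        then have "is_cycle E [c,a,b]" using ab ac eE
          by (auto simp: is_cycle_def adj_def insert_commute nth_Cons split: nat.splits)
        moreover have "set [c,a,b] \<subseteq> V" using c aV by auto
        ultimately show False using acyc by blast
      qed
      then have "c = a \<or> c = b" using ab by auto
      then have "\<exists>w. w \<noteq> c \<and> e = {c, w}" using ab by (metis insert_commute)
      then obtain w where w: "w \<noteq> c" "e = {c, w}" by blast
      have "{e'\<in>E. w\<in>e'} = {e}"
      proof
        show "{e} \<subseteq> {e'\<in>E. w\<in>e'}" using eE w by auto
        show "{e'\<in>E. w\<in>e'} \<subseteq> {e}"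
        proof
          fix e' assume e': "e' \<in> {e'\<in>E. w\<in>e'}"
          then have "e' \<in> E" by simp
          then obtain a' b' where ab': "a' \<noteq> b'" "e' = {a',b'}" using edgeE[OF edges] by metis
          have "c \<in> e'"
          proof (rule ccontr)
            assume "c \<notin> e'"
            then have ac: "a' \<noteq> c" "b' \<noteq> c" using ab' by auto
            have aV: "a' \<in> V" "b' \<in> V" using edges e' ab' by auto
            have "adj E c a'" "adj E c b'" using c ac aV by auto
            then have "is_cycle E [c,a',b']" using ab' ac e'
              by (auto simp: is_cycle_def adj_def insert_commute nth_Cons split: nat.splits)
            moreover have "set [c,a',b'] \<subseteq> V" using c aV by auto
            ultimately show False using acyc by blast
          qed
          then show "e' \<in> {e}" using e' ab' w by auto
        qed
      qed
      then have "d w = 1" by (simp add: d_def degree_def)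
      then show ?thesis using f_eq[OF eE w(1)[symmetric] ] w by simp
    qed
    then show ?thesis using key by simp
  qed
  show ?thesis using part1 part2 by blast
qed

end
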